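(* Let $\phi$ be an absolutely bounded, Lipschitz and internally stable feature map with constants $v_1,v_2,v_3$, let $R=[0,1]^2$, and let $\mathcal{X}$ be a bi-filtration of size $n$. Let $s\in\mathbb{N}$, $u=2^{-s}$, and let $(B_1,B_2)$ be a box pair with centers $c_1<c_2$. Then for all $(p,q)\in B_1\times B_2$ with $p<q$, $$|\Phi_{\mathcal{X}}(p,q)-\Phi_{\mathcal{X}}(c_1,c_2)|\le\frac{v_3 n}{\sqrt2}D+v_1 nW+v_2 nL.$$
   Context: For $p,q\in\mathbb{R}^2$ write $p\le q$ (resp. $p<q$) if both coordinates satisfy $\le$ (resp. $<$). A mono-filtration of a finite simplicial complex $X$ assigns nested subcomplexes $\mathcal{X}(\alpha)$, $\alpha\in\mathbb{R}$; its size is the number of simplices. A bi-filtration $\mathcal{X}$ assigns to $p\in\mathbb{R}^2$ a subcomplex $\mathcal{X}(p)$ with $\mathcal{X}(p)\subseteq\mathcal{X}(q)$ for $p\le q$; it is tame, and its size is the total number of critical points over all simplices (where $p$ is critical for $\sigma$ if for every $\epsilon>0$, $\sigma\notin\mathcal{X}(p_1-\epsilon,p_2)\cup\mathcal{X}(p_1,p_2-\epsilon)$ and $\sigma\in\mathcal{X}(p_1+\epsilon,p_2)\cap\mathcal{X}(p_1,p_2+\epsilon)$); every slice of a bi-filtration of size $n$ has size at most $n$. Let $\mathcal{L}$ be the set of non-vertical lines in $\mathbb{R}^2$ with positive slope ("slices"); each $\ell\in\mathcal{L}$ meets $x=-y$ in a unique point $b$ and is parametrized as $b+\lambda a$ with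 $a=(a_1,a_2)$ its unit direction vector with positive coordinates; its weight is $\hat{\ell}:=\min\{a_1,a_2\}$; for a point $p\in\ell$, $\lambda_p$ denotes the parameter with $p=b+\lambda_pa$; the slice $\mathcal{X}_\ell$ is the mono-filtration $\alpha\mapsto\mathcal{X}(b+\alpha a)$. $d_B$ is the bottleneck distance between persistence diagrams of mono-filtrations. $\Delta^{(1)}:=\{(x_1,x_2):x_1<x_2\}$. A feature map $\phi$ assigns to each mono-filtration $\mathcal{X}$ a function $\phi_{\mathcal{X}}\in L^2(\Delta^{(1)})$; absolutely bounded: $0\le\phi_{\mathcal{X}}(x)\le v_1n$; Lipschitz: $|\phi_{\mathcal{X}}(x)-\phi_{\mathcal{X}}(x')|\le v_2n\|x-x'\|_2$; internally stable: $|\phi_{\mathcal{X}}(x)-\phi_{\mathcal{Y}}(x)|\le v_3n\,d_B(\mathcal{X},\mathcal{Y})$; each for all mono-filtrations of size $n$ and all $x,x'\in\Delta^{(1)}$. $\Delta^{(2)}:=\{(p,q)\in\mathbb{R}^2\times\mathbb{R}^2:p<q\}$; for $(p,q)\in\Delta^{(2)}$ with $\ell$ the line through $p,q$, $\Phi_{\mathcal{X}}(p,q):=\chi_R(p)\chi_R(q)\,\hat{\ell}\,\phi_{\mathcal{X}_\ell}(\lambda_p,\lambda_q)$. Boxes: $R$ is split into $2^s\times2^s$ congruent closed squares of side $u$; a box pair is an ordered pair $(B_1,B_2)$ of such boxes, with centers $c_1,c_2$. A slice $\ell\in\mathcal{L}$ traverses $(B_1,B_2)$ if it meets both $B_1$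 and $B_2$; the center slice $\ell_c$ is the line through $c_1$ and $c_2$. $D$ is the supremum of $d_B(\mathcal{X}_{\ell_c},\mathcal{X}_\ell)$ over all slices $\ell$ traversing $(B_1,B_2)$; $W$ is the supremum of $|\hat{\ell_c}-\hat{\ell}|$ over traversing slices $\ell$; $L_1$ is the supremum of $|\lambda_p-\lambda_{c_1}|$ over traversing slices $\ell$ and points $p\in\ell\cap B_1$ (with $\lambda_p$ along $\ell$ and $\lambda_{c_1}$ along $\ell_c$), $L_2$ is defined likewise with $B_2$ and $c_2$, and $L:=\max\{L_1,L_2\}$. *)

theory Defs
  imports "HOL-Analysis.Analysis" "HOL-Library.Extended_Real"
begin

definition simplicial_complex :: "'v set set \<Rightarrow> bool" where
  "simplicial_complex K \<longleftrightarrow> finite K \<and>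
     (\<forall>\<sigma>\<in>K. finite \<sigma> \<and> \<sigma> \<noteq> {} \<and> (\<forall>\<tau>. \<tau> \<noteq> {} \<and> \<tau> \<subseteq> \<sigma> \<longrightarrow> \<tau> \<in> K))"

definition subcomplex :: "'v set set \<Rightarrow> 'v set set \<Rightarrow> bool" where
  "subcomplex L K \<longleftrightarrow> L \<subseteq> K \<and> (\<forall>\<sigma>\<in>L. \<forall>\<tau>. \<tau> \<noteq> {} \<and> \<tau> \<subseteq> \<sigma> \<longrightarrow> \<tau> \<in> L)"

definition mono_filtration :: "(real \<Rightarrow> 'v set set) \<Rightarrow> bool" where
  "mono_filtration F \<longleftrightarrow> (\<exists>K. simplicial_complex K \<and> (\<forall>\<alpha>. subcomplex (F \<alpha>) K) \<and>
     (\<forall>\<alpha> \<beta>. \<alpha> \<le> \<beta> \<longrightarrow> F \<alpha> \<subseteq> F \<beta>) \<and>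
     (\<forall>\<sigma>\<in>K. (\<forall>\<alpha>. \<sigma> \<notin> F \<alpha>) \<or> (\<exists>t. \<forall>\<alpha>. \<sigma> \<in> F \<alpha> \<longleftrightarrow> t \<le> \<alpha>)))"

definition mf_size :: "(real \<Rightarrow> 'v set set) \<Rightarrow> nat" where
  "mf_size F = card (\<Union>\<alpha>. F \<alpha>)"

section \<open>Simplicial homology over GF(2); chains are sets of simplices\<close>

definition ksimp :: "'v set set \<Rightarrow> nat \<Rightarrow> 'v set set" where
  "ksimp K k = {\<sigma>\<in>K. card \<sigma> = Suc k}"

definition bdry :: "'v set set \<Rightarrow> 'v set set" where
  "bdry c = {\<tau>. \<tau> \<noteq> {} \<and> odd (card {\<sigma>\<in>c. \<tau> \<subseteq> \<sigma> \<and> card \<sigma> = Suc (card \<tau>)})}"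

definition cycles :: "'v set set \<Rightarrow> nat \<Rightarrow> 'v set set set" where
  "cycles K k = {c. c \<subseteq> ksimp K k \<and> bdry c = {}}"

definition boundaries :: "'v set set \<Rightarrow> nat \<Rightarrow> 'v set set set" where
  "boundaries L k = bdry ` {c. c \<subseteq> ksimp L (Suc k)}"

text \<open>Rank of the map H_k(K) to H_k(L) induced by inclusion (K subcomplex of L), over GF(2):
  dim Z_k(K) - dim (Z_k(K) \<inter> B_k(L)); dimensions of GF(2)-spaces are log2 of cardinalities.\<close>
definition hom_rank :: "'v set set \<Rightarrow> 'v set set \<Rightarrow> nat \<Rightarrow> real" where
  "hom_rank K L k = log 2 (card (cycles K k)) - log 2 (card (cycles K k \<inter> boundaries L k))"

definition pers_rank :: "(real \<Rightarrow> 'v set set) \<Rightarrow> nat \<Rightarrow> real \<Rightarrow> real \<Rightarrow> real" where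
  "pers_rank F k s t = hom_rank (F s) (F t) k"

definition pd_mult :: "(real \<Rightarrow> 'v set set) \<Rightarrow> nat \<Rightarrow> real \<Rightarrow> ereal \<Rightarrow> real" where
  "pd_mult F k b d =
     (if ereal b < d then
        (case d of
           ereal e \<Rightarrow> Lim (at_right 0) (\<lambda>\<epsilon>. pers_rank F k b (e - \<epsilon>) - pers_rank F k (b - \<epsilon>) (e - \<epsilon>)
                                          - pers_rank F k b e + pers_rank F k (b - \<epsilon>) e)
         | PInfty \<Rightarrow> Lim at_top (\<lambda>T. Lim (at_right 0) (\<lambda>\<epsilon>. pers_rank F k b T - pers_rank F k (b - \<epsilon>) T))
         | MInfty \<Rightarrow> 0)
      else 0)"

definition dgm_list :: "(real \<Rightarrow> 'v set set) \<Rightarrow> nat \<Rightarrow> (real \<times> ereal) list \<Rightarrow> bool" where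
  "dgm_list F k xs \<longleftrightarrow> (\<forall>x. real (count_list xs x) = pd_mult F k (fst x) (snd x))"

definition pt_cost :: "real \<times> ereal \<Rightarrow> real \<times> ereal \<Rightarrow> ereal" where
  "pt_cost x y = max (ereal \<bar>fst x - fst y\<bar>) (if snd x = snd y then 0 else \<bar>snd x - snd y\<bar>)"

definition diag_cost :: "real \<times> ereal \<Rightarrow> ereal" where
  "diag_cost x = (snd x - ereal (fst x)) / 2"

definition matching :: "(nat \<times> nat) set \<Rightarrow> 'a list \<Rightarrow> 'b list \<Rightarrow> bool" where
  "matching M xs ys \<longleftrightarrow> M \<subseteq> {..<length xs} \<times> {..<length ys} \<and>
     (\<forall>m\<in>M. \<forall>m'\<in>M. fst m = fst m' \<longleftrightarrow> snd m = snd m')"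

definition match_cost :: "(real \<times> ereal) list \<Rightarrow> (real \<times> ereal) list \<Rightarrow> (nat \<times> nat) set \<Rightarrow> ereal" where
  "match_cost xs ys M = max 0 (Sup ((\<lambda>m. pt_cost (xs ! fst m) (ys ! snd m)) ` M
      \<union> (\<lambda>i. diag_cost (xs ! i)) ` ({..<length xs} - fst ` M)
      \<union> (\<lambda>j. diag_cost (ys ! j)) ` ({..<length ys} - snd ` M)))"

definition bottleneck :: "nat \<Rightarrow> (real \<Rightarrow> 'v set set) \<Rightarrow> (real \<Rightarrow> 'v set set) \<Rightarrow> ereal" where
  "bottleneck k F G = (INF t \<in> {(xs, ys, M). dgm_list F k xs \<and> dgm_list G k ys \<and> matching M xs ys}.
                          match_cost (fst t) (fst (snd t)) (snd (snd t)))"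

definition le2 :: "real \<times> real \<Rightarrow> real \<times> real \<Rightarrow> bool" where
  "le2 p q \<longleftrightarrow> fst p \<le> fst q \<and> snd p \<le> snd q"

definition lt2 :: "real \<times> real \<Rightarrow> real \<times> real \<Rightarrow> bool" where
  "lt2 p q \<longleftrightarrow> fst p < fst q \<and> snd p < snd q"

definition is_critical :: "(real \<times> real \<Rightarrow> 'v set set) \<Rightarrow> 'v set \<Rightarrow> real \<times> real \<Rightarrow> bool" where
  "is_critical X \<sigma> p \<longleftrightarrow> (\<forall>\<epsilon>>0.
      \<sigma> \<notin> X (fst p - \<epsilon>, snd p) \<union> X (fst p, snd p - \<epsilon>) \<and>
      \<sigma> \<in> X (fst p + \<epsilon>, snd p) \<inter> X (fst p, snd p + \<epsilon>))"

definition bifiltration :: "'v set set \<Rightarrow> (real \<times> real \<Rightarrow> 'v set set) \<Rightarrow> bool" where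
  "bifiltration K X \<longleftrightarrow> simplicial_complex K \<and> (\<forall>p. subcomplex (X p) K) \<and>
     (\<forall>p q. le2 p q \<longrightarrow> X p \<subseteq> X q)"

definition tame_bifiltration :: "'v set set \<Rightarrow> (real \<times> real \<Rightarrow> 'v set set) \<Rightarrow> bool" where
  "tame_bifiltration K X \<longleftrightarrow> bifiltration K X \<and>
     (\<forall>\<sigma>\<in>K. finite {p. is_critical X \<sigma> p} \<and> (\<forall>q. \<sigma> \<in> X q \<longleftrightarrow> (\<exists>p. is_critical X \<sigma> p \<and> le2 p q)))"

definition bf_size :: "'v set set \<Rightarrow> (real \<times> real \<Rightarrow> 'v set set) \<Rightarrow> nat" where
  "bf_size K X = (\<Sum>\<sigma>\<in>K. card {p. is_critical X \<sigma> p})"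

definition is_slice :: "real \<times> real \<Rightarrow> real \<times> real \<Rightarrow> bool" where
  "is_slice b a \<longleftrightarrow> fst b + snd b = 0 \<and> fst a > 0 \<and> snd a > 0 \<and> (fst a)\<^sup>2 + (snd a)\<^sup>2 = 1"

definition on_line :: "real \<times> real \<Rightarrow> real \<times> real \<Rightarrow> real \<times> real \<Rightarrow> bool" where
  "on_line b a p \<longleftrightarrow> (\<exists>t::real. p = b + t *\<^sub>R a)"

definition lam :: "real \<times> real \<Rightarrow> real \<times> real \<Rightarrow> real \<times> real \<Rightarrow> real" where
  "lam b a p = (fst p - fst b) * fst a + (snd p - snd b) * snd a"

definition slice_weight :: "real \<times> real \<Rightarrow> real" where
  "slice_weight a = min (fst a) (snd a)"

definition slice :: "(real \<times> real \<Rightarrow> 'v set set) \<Rightarrow> real \<times> real \<Rightarrow> real \<times> real \<Rightarrow> real \<Rightarrow> 'v set set" where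
  "slice X b a = (\<lambda>\<alpha>. X (b + \<alpha> *\<^sub>R a))"

definition line_dir :: "real \<times> real \<Rightarrow> real \<times> real \<Rightarrow> real \<times> real" where
  "line_dir p q = (1 / norm (q - p)) *\<^sub>R (q - p)"

definition line_base :: "real \<times> real \<Rightarrow> real \<times> real \<Rightarrow> real \<times> real" where
  "line_base p q = p - ((fst p + snd p) / (fst (line_dir p q) + snd (line_dir p q))) *\<^sub>R line_dir p q"

definition Delta1 :: "(real \<times> real) set" where
  "Delta1 = {x. fst x < snd x}"

definition unit_square :: "(real \<times> real) set" where
  "unit_square = {0..1} \<times> {0..1}"

definition Phi :: "((real \<Rightarrow> 'v set set) \<Rightarrow> real \<times> real \<Rightarrow> real) \<Rightarrow> (real \<times> real \<Rightarrow> 'v set set)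
                    \<Rightarrow> real \<times> real \<Rightarrow> real \<times> real \<Rightarrow> real" where
  "Phi \<phi> X p q = (let a = line_dir p q; b = line_base p q in
     indicator unit_square p * indicator unit_square q * slice_weight a *
     \<phi> (slice X b a) (lam b a p, lam b a q))"

definition box_sq :: "nat \<Rightarrow> nat \<Rightarrow> nat \<Rightarrow> (real \<times> real) set" where
  "box_sq s i j = {real i / 2^s .. (real i + 1) / 2^s} \<times> {real j / 2^s .. (real j + 1) / 2^s}"

definition box_center :: "nat \<Rightarrow> nat \<Rightarrow> nat \<Rightarrow> real \<times> real" where
  "box_center s i j = ((real i + 1/2) / 2^s, (real j + 1/2) / 2^s)"

definition traverses :: "(real \<times> real) set \<Rightarrow> (real \<times> real) set \<Rightarrow> real \<times> real \<Rightarrow> real \<times> real \<Rightarrow> bool" where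
  "traverses B1 B2 b a \<longleftrightarrow> is_slice b a \<and> (\<exists>p\<in>B1. on_line b a p) \<and> (\<exists>q\<in>B2. on_line b a q)"

definition D_box :: "nat \<Rightarrow> (real \<times> real \<Rightarrow> 'v set set) \<Rightarrow> (real \<times> real) set \<Rightarrow> (real \<times> real) set
                     \<Rightarrow> real \<times> real \<Rightarrow> real \<times> real \<Rightarrow> ereal" where
  "D_box k X B1 B2 c1 c2 = (SUP ba \<in> {(b, a). traverses B1 B2 b a}.
      bottleneck k (slice X (line_base c1 c2) (line_dir c1 c2)) (slice X (fst ba) (snd ba)))"

definition W_box :: "(real \<times> real) set \<Rightarrow> (real \<times> real) set \<Rightarrow> real \<times> real \<Rightarrow> real \<times> real \<Rightarrow> ereal" where
  "W_box B1 B2 c1 c2 = (SUP ba \<in> {(b, a). traverses B1 B2 b a}.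
      ereal \<bar>slice_weight (line_dir c1 c2) - slice_weight (snd ba)\<bar>)"

definition L_box :: "(real \<times> real) set \<Rightarrow> (real \<times> real) set \<Rightarrow> (real \<times> real) set \<Rightarrow> real \<times> real \<Rightarrow> real \<times> real
                     \<Rightarrow> real \<times> real \<Rightarrow> ereal" where
  "L_box B1 B2 Bi c1 c2 ci = (SUP t \<in> {(b, a, p). traverses B1 B2 b a \<and> p \<in> Bi \<and> on_line b a p}.
      ereal \<bar>lam (fst t) (fst (snd t)) (snd (snd t)) - lam (line_base c1 c2) (line_dir c1 c2) ci\<bar>)"

end

theory Submission
  imports Defs
begin
lemma line_props:
  assumes "lt2 p q"
  shows "is_slice (line_base p q) (line_dir p q)" "on_line (line_base p q) (line_dir p q) p"
    "on_line (line_base p q) (line_dir p q) q"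
    "(lam (line_base p q) (line_dir p q) p, lam (line_base p q) (line_dir p q) q) \<in> Delta1"
proof -
  define d where "d = q - p"
  have d1: "fst d > 0" "snd d > 0" using assms by (auto simp: lt2_def d_def)
  define N where "N = norm d"
  have N: "N = sqrt ((fst d)^2 + (snd d)^2)" unfolding N_def
    by (metis norm_Pair prod.collapse real_norm_def power2_abs)
  have Npos: "N > 0" using d1 N by (simp add: add_pos_pos)
  have a: "line_dir p q = (fst d / N, snd d / N)" unfolding line_dir_def N_def d_def
    by (simp add: scaleR_prod_def)
  have a1: "fst (line_dir p q) > 0" "snd (line_dir p q) > 0" using a Npos d1 by auto
  have "(fst d / N)^2 + (snd d / N)^2 = ((fst d)^2 + (snd d)^2) / N^2" by (simp add: power_divide add_divide_distrib)
  also have "\<dots> = 1" using N Npos d1 by (simp add: N)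
  finally have a2: "(fst (line_dir p q))^2 + (snd (line_dir p q))^2 = 1" using a by simp
  show "is_slice (line_base p q) (line_dir p q)" unfolding is_slice_def
    using a1 a2 by (simp add: line_base_def field_simps)
  show "on_line (line_base p q) (line_dir p q) p" unfolding on_line_def line_base_def
    by (rule exI[of _ "(fst p + snd p) / (fst (line_dir p q) + snd (line_dir p q))"]) simp
  show "on_line (line_base p q) (line_dir p q) q" unfolding on_line_def line_base_def
    apply (rule exI[of _ "(fst p + snd p) / (fst (line_dir p q) + snd (line_dir p q)) + N"])
    using Npos by (simp add: algebra_simps line_dir_def N_def d_def)
  have "lam (line_base p q) (line_dir p q) q - lam (line_base p q) (line_dir p q) p
     = fst d * fst (line_dir p q) + snd d * snd (line_dir p q)"
    unfolding lam_def d_def by (simp add: algebra_simps)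
  also have "\<dots> > 0" using d1 a1 by (simp add: add_pos_pos)
  finally show "(lam (line_base p q) (line_dir p q) p, lam (line_base p q) (line_dir p q) q) \<in> Delta1"
    by (simp add: Delta1_def)
qed



definition tp :: "real \<times> real \<Rightarrow> real \<times> real \<Rightarrow> real \<times> real \<Rightarrow> real" where
  "tp b a p = max ((fst p - fst b) / fst a) ((snd p - snd b) / snd a)"


lemma tp_iff:
  assumes "is_slice b a"
  shows "le2 p (b + \<alpha> *\<^sub>R a) \<longleftrightarrow> tp b a p \<le> \<alpha>"
proof -
  have a: "fst a > 0" "snd a > 0" using assms by (auto simp: is_slice_def)
  have "fst p \<le> fst b + \<alpha> * fst a \<longleftrightarrow> (fst p - fst b) / fst a \<le> \<alpha>"
    using a by (simp add: pos_divide_le_eq algebra_simps)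
  moreover have "snd p \<le> snd b + \<alpha> * snd a \<longleftrightarrow> (snd p - snd b) / snd a \<le> \<alpha>"
    using a by (simp add: pos_divide_le_eq algebra_simps)
  ultimately show ?thesis by (simp add: le2_def tp_def)
qed


lemma slice_mono:
  assumes "tame_bifiltration K X" "is_slice b a"
  shows "mono_filtration (slice X b a)"
proof -
  have bf: "bifiltration K X" and tm: "\<forall>\<sigma>\<in>K. finite {p. is_critical X \<sigma> p} \<and> (\<forall>q. \<sigma> \<in> X q \<longleftrightarrow> (\<exists>p. is_critical X \<sigma> p \<and> le2 p q))"
    using assms(1) by (auto simp: tame_bifiltration_def)
  have a: "fst a > 0" "snd a > 0" using assms(2) by (auto simp: is_slice_def)
  have Xm: "\<And>p q. le2 p q \<Longrightarrow> X p \<subseteq> X q" using bf unfolding bifiltration_def by blast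
  have Xs: "\<And>p. subcomplex (X p) K" using bf unfolding bifiltration_def by blast
  have sc: "simplicial_complex K" using bf unfolding bifiltration_def by blast
  have mono: "slice X b a \<alpha> \<subseteq> slice X b a \<beta>" if "\<alpha> \<le> \<beta>" for \<alpha> \<beta>
  proof -
    have "le2 (b + \<alpha> *\<^sub>R a) (b + \<beta> *\<^sub>R a)" using a that
      by (simp add: le2_def mult_right_mono)
    thus ?thesis using Xm by (simp add: slice_def)
  qed
  have last: "(\<forall>\<alpha>. \<sigma> \<notin> slice X b a \<alpha>) \<or> (\<exists>t. \<forall>\<alpha>. \<sigma> \<in> slice X b a \<alpha> \<longleftrightarrow> t \<le> \<alpha>)" if "\<sigma> \<in> K" for \<sigma>
  proof (cases "{p. is_critical X \<sigma> p} = {}")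
    case True
    have "\<And>q. \<sigma> \<in> X q \<longleftrightarrow> (\<exists>p. is_critical X \<sigma> p \<and> le2 p q)" using tm that by blast
    then have "\<And>q. \<sigma> \<notin> X q" using True by blast
    then show ?thesis by (simp add: slice_def)
  next
    case False
    define P where "P = {p. is_critical X \<sigma> p}"
    have fin: "finite P" using tm that P_def by auto
    have "\<sigma> \<in> slice X b a \<alpha> \<longleftrightarrow> Min (tp b a ` P) \<le> \<alpha>" for \<alpha>
    proof -
      have t1: "\<sigma> \<in> X (b + \<alpha> *\<^sub>R a) \<longleftrightarrow> (\<exists>p. is_critical X \<sigma> p \<and> le2 p (b + \<alpha> *\<^sub>R a))"
        using tm that by blast
      have "\<sigma> \<in> slice X b a \<alpha> \<longleftrightarrow> (\<exists>p\<in>P. tp b a p \<le> \<alpha>)"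
        unfolding slice_def P_def using t1 tp_iff[OF assms(2)] by simp
      also have "\<dots> \<longleftrightarrow> Min (tp b a ` P) \<le> \<alpha>"
        using fin False P_def by (simp add: Min_le_iff)
      finally show ?thesis .
    qed
    then show ?thesis by blast
  qed
  show ?thesis unfolding mono_filtration_def
    apply (rule exI[of _ K])
    using sc Xs mono last by (simp add: slice_def)
qed


lemma slice_union:
  assumes "tame_bifiltration K X" "is_slice b a"
  shows "(\<Union>\<alpha>. slice X b a \<alpha>) = {\<sigma>\<in>K. \<exists>p. is_critical X \<sigma> p}"
proof -
  have bf: "bifiltration K X" and tm: "\<forall>\<sigma>\<in>K. finite {p. is_critical X \<sigma> p} \<and> (\<forall>q. \<sigma> \<in> X q \<longleftrightarrow> (\<exists>p. is_critical X \<sigma> p \<and> le2 p q))"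
    using assms(1) by (auto simp: tame_bifiltration_def)
  have sub: "X q \<subseteq> K" for q using bf unfolding bifiltration_def subcomplex_def by blast
  show ?thesis
  proof
    show "(\<Union>\<alpha>. slice X b a \<alpha>) \<subseteq> {\<sigma>\<in>K. \<exists>p. is_critical X \<sigma> p}"
    proof
      fix \<sigma> assume "\<sigma> \<in> (\<Union>\<alpha>. slice X b a \<alpha>)"
      then obtain \<alpha> where s: "\<sigma> \<in> X (b + \<alpha> *\<^sub>R a)" by (auto simp: slice_def)
      hence K: "\<sigma> \<in> K" using sub by blast
      hence "\<sigma> \<in> X (b + \<alpha> *\<^sub>R a) \<longleftrightarrow> (\<exists>p. is_critical X \<sigma> p \<and> le2 p (b + \<alpha> *\<^sub>R a))"
        using tm by blast
      thus "\<sigma> \<in> {\<sigma>\<in>K. \<exists>p. is_critical X \<sigma> p}" using s K by blast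
    qed
  next
    show "{\<sigma>\<in>K. \<exists>p. is_critical X \<sigma> p} \<subseteq> (\<Union>\<alpha>. slice X b a \<alpha>)"
    proof
      fix \<sigma> assume "\<sigma> \<in> {\<sigma>\<in>K. \<exists>p. is_critical X \<sigma> p}"
      then obtain p where "\<sigma> \<in> K" "is_critical X \<sigma> p" by auto
      moreover have "le2 p (b + tp b a p *\<^sub>R a)" using tp_iff[OF assms(2), of p "tp b a p"] by simp
      ultimately have "\<sigma> \<in> X (b + tp b a p *\<^sub>R a)" using tm by blast
      then have "\<sigma> \<in> slice X b a (tp b a p)" by (simp add: slice_def)
      then show "\<sigma> \<in> (\<Union>\<alpha>. slice X b a \<alpha>)" by blast
    qed
  qed
qed


lemma slice_size:
  assumes "tame_bifiltration K X" "is_slice b a"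
  shows "mf_size (slice X b a) = card {\<sigma>\<in>K. \<exists>p. is_critical X \<sigma> p}"
    "mf_size (slice X b a) \<le> bf_size K X"
proof -
  show e: "mf_size (slice X b a) = card {\<sigma>\<in>K. \<exists>p. is_critical X \<sigma> p}"
    unfolding mf_size_def using slice_union[OF assms] by simp
  have finK: "finite K" using assms(1)
    unfolding tame_bifiltration_def bifiltration_def simplicial_complex_def by blast
  have tm: "\<forall>\<sigma>\<in>K. finite {p. is_critical X \<sigma> p}"
    using assms(1) unfolding tame_bifiltration_def by blast
  have "card {\<sigma>\<in>K. \<exists>p. is_critical X \<sigma> p} = (\<Sum>\<sigma>\<in>{\<sigma>\<in>K. \<exists>p. is_critical X \<sigma> p}. 1)" by simp
  also have "\<dots> \<le> (\<Sum>\<sigma>\<in>{\<sigma>\<in>K. \<exists>p. is_critical X \<sigma> p}. card {p. is_critical X \<sigma> p})"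
  proof (rule sum_mono)
    fix \<sigma> assume "\<sigma> \<in> {\<sigma>\<in>K. \<exists>p. is_critical X \<sigma> p}"
    then have "\<sigma> \<in> K" "{p. is_critical X \<sigma> p} \<noteq> {}" by auto
    then have "card {p. is_critical X \<sigma> p} > 0" using tm by (simp add: card_gt_0_iff)
    then show "1 \<le> card {p. is_critical X \<sigma> p}" by simp
  qed
  also have "\<dots> \<le> bf_size K X" unfolding bf_size_def
    by (rule sum_mono2[OF finK]) (simp_all add: subset_iff)
  finally show "mf_size (slice X b a) \<le> bf_size K X" using e by simp
qed



lemma weight_bound:
  assumes "is_slice b a"
  shows "0 \<le> slice_weight a" "slice_weight a * sqrt 2 \<le> 1"
proof -
  have a: "fst a > 0" "snd a > 0" "(fst a)\<^sup>2 + (snd a)\<^sup>2 = 1" using assms by (auto simp: is_slice_def)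
  show w0: "0 \<le> slice_weight a" using a by (simp add: slice_weight_def)
  have "(slice_weight a)^2 \<le> fst a * snd a" using a
    by (auto simp: slice_weight_def min_def power2_eq_square intro: mult_mono)
  also have "\<dots> \<le> 1/2" using a sum_squares_bound[of "fst a" "snd a"] by simp
  finally have "2 * (slice_weight a)^2 \<le> 1" by simp
  hence "sqrt (2 * (slice_weight a)^2) \<le> 1" by simp
  thus "slice_weight a * sqrt 2 \<le> 1" using w0 by (simp add: real_sqrt_mult mult.commute)
qed


lemma box_unit:
  assumes "i < 2^s" "j < 2^s" "p \<in> box_sq s i j"
  shows "indicator unit_square p = (1::real)"
proof -
  have "real i + 1 \<le> 2^s" "real j + 1 \<le> 2^s" using assms(1,2)
    by (metis Suc_leI of_nat_Suc of_nat_le_iff of_nat_numeral of_nat_power add.commute)+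
  hence "(real i + 1) / 2^s \<le> 1" "(real j + 1) / 2^s \<le> 1" by simp_all
  moreover have "0 \<le> real i / 2^s" "0 \<le> real j / 2^s" by simp_all
  ultimately have "p \<in> unit_square" using assms(3)
    unfolding box_sq_def unit_square_def mem_Times_iff atLeastAtMost_iff by linarith
  thus ?thesis by simp
qed


lemma center_in: "box_center s i j \<in> box_sq s i j"
  by (simp add: box_center_def box_sq_def divide_right_mono)


lemma norm_bound:
  fixes d1 d2 :: real
  shows "norm (d1, d2) \<le> sqrt 2 * max \<bar>d1\<bar> \<bar>d2\<bar>"
proof -
  define M where "M = max \<bar>d1\<bar> \<bar>d2\<bar>"
  have "d1^2 \<le> M^2" "d2^2 \<le> M^2" unfolding M_def
    by (metis abs_ge_zero max.cobounded1 max.cobounded2 power2_abs power_mono)+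
  hence "d1^2 + d2^2 \<le> 2 * M^2" by simp
  hence "sqrt (d1^2 + d2^2) \<le> sqrt (2 * M^2)" by simp
  also have "\<dots> = sqrt 2 * M" by (simp add: real_sqrt_mult M_def)
  finally show ?thesis by (simp add: norm_Pair M_def)
qed


lemma bottleneck_nonneg: "0 \<le> bottleneck k F G"
  unfolding bottleneck_def match_cost_def by (rule INF_greatest) simp

theorem lemma1:
  fixes \<phi> :: "(real \<Rightarrow> 'v set set) \<Rightarrow> real \<times> real \<Rightarrow> real"
    and v1 v2 v3 :: real and k :: nat
    and K :: "'v set set" and X :: "real \<times> real \<Rightarrow> 'v set set"
    and s i1 j1 i2 j2 :: nat
  assumes L2: "\<And>F. mono_filtration F \<Longrightarrow>
               set_borel_measurable lborel Delta1 (\<phi> F) \<and> set_integrable lborel Delta1 (\<lambda>x. (\<phi> F x)\<^sup>2)"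
    and abs_bounded: "\<And>F x. mono_filtration F \<Longrightarrow> x \<in> Delta1 \<Longrightarrow>
               0 \<le> \<phi> F x \<and> \<phi> F x \<le> v1 * real (mf_size F)"
    and lipschitz: "\<And>F x x'. mono_filtration F \<Longrightarrow> x \<in> Delta1 \<Longrightarrow> x' \<in> Delta1 \<Longrightarrow>
               \<bar>\<phi> F x - \<phi> F x'\<bar> \<le> v2 * real (mf_size F) * norm (x - x')"
    and int_stable: "\<And>F G x. mono_filtration F \<Longrightarrow> mono_filtration G \<Longrightarrow> mf_size F = mf_size G \<Longrightarrow>
               x \<in> Delta1 \<Longrightarrow>
               ereal \<bar>\<phi> F x - \<phi> G x\<bar> \<le> ereal (v3 * real (mf_size F)) * bottleneck k F G"
    and v_nonneg: "0 \<le> v1" "0 \<le> v2" "0 \<le> v3"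
    and bif: "tame_bifiltration K X"
    and boxes: "i1 < 2^s" "j1 < 2^s" "i2 < 2^s" "j2 < 2^s"
    and centers: "lt2 (box_center s i1 j1) (box_center s i2 j2)"
  shows "\<forall>p\<in>box_sq s i1 j1. \<forall>q\<in>box_sq s i2 j2. lt2 p q \<longrightarrow>
           ereal \<bar>Phi \<phi> X p q - Phi \<phi> X (box_center s i1 j1) (box_center s i2 j2)\<bar>
             \<le> ereal (v3 * real (bf_size K X) / sqrt 2)
                   * D_box k X (box_sq s i1 j1) (box_sq s i2 j2) (box_center s i1 j1) (box_center s i2 j2)
               + ereal (v1 * real (bf_size K X))
                   * W_box (box_sq s i1 j1) (box_sq s i2 j2) (box_center s i1 j1) (box_center s i2 j2)
               + ereal (v2 * real (bf_size K X))
                   * max (L_box (box_sq s i1 j1) (box_sq s i2 j2) (box_sq s i1 j1)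
                            (box_center s i1 j1) (box_center s i2 j2) (box_center s i1 j1))
                         (L_box (box_sq s i1 j1) (box_sq s i2 j2) (box_sq s i2 j2)
                            (box_center s i1 j1) (box_center s i2 j2) (box_center s i2 j2))"
proof (intro ballI impI)
  fix p q assume pB: "p \<in> box_sq s i1 j1" and qB: "q \<in> box_sq s i2 j2" and pq: "lt2 p q"
  define c1 where "c1 = box_center s i1 j1"
  define c2 where "c2 = box_center s i2 j2"
  define B1 where "B1 = box_sq s i1 j1"
  define B2 where "B2 = box_sq s i2 j2"
  define a where "a = line_dir p q"
  define b where "b = line_base p q"
  define ac where "ac = line_dir c1 c2"
  define bc where "bc = line_base c1 c2"
  define F where "F = slice X b a"
  define Fc where "Fc = slice X bc ac"
  define x where "x = (lam b a p, lam b a q)"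
  define xc where "xc = (lam bc ac c1, lam bc ac c2)"
  define w where "w = slice_weight a"
  define wc where "wc = slice_weight ac"
  define n where "n = bf_size K X"
  define m where "m = mf_size F"
  define D where "D = D_box k X B1 B2 c1 c2"
  define W where "W = W_box B1 B2 c1 c2"
  define L1 where "L1 = L_box B1 B2 B1 c1 c2 c1"
  define L2 where "L2 = L_box B1 B2 B2 c1 c2 c2"
  have c12: "lt2 c1 c2" using centers by (simp add: c1_def c2_def)
  have sl: "is_slice b a" and onp: "on_line b a p" and onq: "on_line b a q" and xD: "x \<in> Delta1"
    using line_props[OF pq] by (simp_all add: a_def b_def x_def)
  have slc: "is_slice bc ac" and xcD: "xc \<in> Delta1"
    using line_props[OF c12] by (simp_all add: ac_def bc_def xc_def)
  have mF: "mono_filtration F" using slice_mono[OF bif sl] by (simp add: F_def)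
  have mFc: "mono_filtration Fc" using slice_mono[OF bif slc] by (simp add: Fc_def)
  have mm: "mf_size Fc = m" using slice_size[OF bif sl] slice_size[OF bif slc]
    by (simp add: F_def Fc_def m_def)
  have mn: "real m \<le> real n" using slice_size[OF bif sl] by (simp add: F_def m_def n_def)
  have tr: "traverses B1 B2 b a" unfolding traverses_def using sl onp onq pB qB
    by (auto simp: B1_def B2_def)
  have c1B: "c1 \<in> B1" "c2 \<in> B2" by (simp_all add: c1_def c2_def B1_def B2_def center_in)
  have Phi1: "Phi \<phi> X p q = w * \<phi> F x"
    using box_unit[OF boxes(1,2) pB] box_unit[OF boxes(3,4) qB]
    by (simp add: Phi_def a_def b_def w_def F_def x_def Let_def)
  have Phi2: "Phi \<phi> X c1 c2 = wc * \<phi> Fc xc"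
    using box_unit[OF boxes(1,2) center_in] box_unit[OF boxes(3,4) center_in]
    by (simp add: Phi_def ac_def bc_def wc_def Fc_def xc_def Let_def c1_def c2_def)
  have w0: "0 \<le> w" "0 \<le> wc" "wc * sqrt 2 \<le> 1"
    using weight_bound[OF sl] weight_bound[OF slc] by (simp_all add: w_def wc_def)
  have h0: "0 \<le> \<phi> F x" "\<phi> F x \<le> v1 * real m" using abs_bounded[OF mF xD] by (simp_all add: m_def)
  have h1: "ereal \<bar>\<phi> Fc x - \<phi> F x\<bar> \<le> ereal (v3 * real m) * bottleneck k Fc F"
    using int_stable[OF mFc mF _ xD] mm by (simp add: m_def)
  have h2: "\<bar>\<phi> Fc x - \<phi> Fc xc\<bar> \<le> v2 * real m * norm (x - xc)"
    using lipschitz[OF mFc xD xcD] mm by simp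
  have Wb: "ereal \<bar>wc - w\<bar> \<le> W" unfolding W_def W_box_def
    by (rule SUP_upper2[of "(b, a)"]) (use tr in \<open>simp_all add: w_def wc_def ac_def\<close>)
  have Db: "bottleneck k Fc F \<le> D" unfolding D_def D_box_def
    by (rule SUP_upper2[of "(b, a)"]) (use tr in \<open>simp_all add: F_def Fc_def ac_def bc_def\<close>)
  have L1b: "ereal \<bar>lam b a p - lam bc ac c1\<bar> \<le> L1" unfolding L1_def L_box_def
    by (rule SUP_upper2[of "(b, a, p)"]) (use tr pB onp in \<open>simp_all add: B1_def ac_def bc_def\<close>)
  have L2b: "ereal \<bar>lam b a q - lam bc ac c2\<bar> \<le> L2" unfolding L2_def L_box_def
    by (rule SUP_upper2[of "(b, a, q)"]) (use tr qB onq in \<open>simp_all add: B2_def ac_def bc_def\<close>)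
  have bn0: "0 \<le> bottleneck k Fc F" by (rule bottleneck_nonneg)
  have D0: "0 \<le> D" using bn0 Db by simp
  define t1 where "t1 = \<bar>w - wc\<bar> * \<phi> F x"
  define t2 where "t2 = wc * \<bar>\<phi> F x - \<phi> Fc x\<bar>"
  define t3 where "t3 = wc * \<bar>\<phi> Fc x - \<phi> Fc xc\<bar>"
  have main: "\<bar>Phi \<phi> X p q - Phi \<phi> X c1 c2\<bar> \<le> t1 + t2 + t3"
  proof -
    define A where "A = (w - wc) * \<phi> F x"
    define B where "B = wc * (\<phi> F x - \<phi> Fc x)"
    define C where "C = wc * (\<phi> Fc x - \<phi> Fc xc)"
    have eq: "Phi \<phi> X p q - Phi \<phi> X c1 c2 = A + B + C"
      unfolding Phi1 Phi2 A_def B_def C_def by (simp add: algebra_simps)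
    have tri: "\<bar>A + B + C\<bar> \<le> \<bar>A\<bar> + \<bar>B\<bar> + \<bar>C\<bar>"
      using abs_triangle_ineq[of "A + B" C] abs_triangle_ineq[of A B] by linarith
    have "\<bar>A\<bar> = t1" unfolding A_def t1_def abs_mult using h0(1) by simp
    moreover have "\<bar>B\<bar> = t2" unfolding B_def t2_def abs_mult using w0(2) by simp
    moreover have "\<bar>C\<bar> = t3" unfolding C_def t3_def abs_mult using w0(2) by simp
    ultimately show ?thesis using eq tri by simp
  qed
  have e1: "ereal t1 \<le> ereal (v1 * real n) * W"
  proof -
    have f1: "\<phi> F x \<le> v1 * real n"
      using h0(2) mult_left_mono[OF mn v_nonneg(1)] by linarith
    have "t1 \<le> \<bar>w - wc\<bar> * (v1 * real n)" unfolding t1_def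
      by (rule mult_left_mono[OF f1]) simp
    also have "\<dots> = (v1 * real n) * \<bar>wc - w\<bar>" by (simp add: abs_minus_commute)
    finally have "t1 \<le> (v1 * real n) * \<bar>wc - w\<bar>" .
    hence "ereal t1 \<le> ereal (v1 * real n) * ereal \<bar>wc - w\<bar>" by simp
    also have "\<dots> \<le> ereal (v1 * real n) * W"
      by (rule ereal_mult_left_mono[OF Wb]) (use v_nonneg in simp)
    finally show ?thesis .
  qed
  have e2: "ereal t2 \<le> ereal (v3 * real n / sqrt 2) * D"
  proof -
    have "ereal t2 = ereal wc * ereal \<bar>\<phi> Fc x - \<phi> F x\<bar>" by (simp add: t2_def abs_minus_commute)
    also have "\<dots> \<le> ereal wc * (ereal (v3 * real m) * bottleneck k Fc F)"
      by (rule ereal_mult_left_mono[OF h1]) (use w0 in simp)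
    also have "\<dots> \<le> ereal wc * (ereal (v3 * real n) * D)"
    proof (rule ereal_mult_left_mono)
      have "ereal (v3 * real m) * bottleneck k Fc F \<le> ereal (v3 * real m) * D"
        by (rule ereal_mult_left_mono[OF Db]) (use v_nonneg in simp)
      also have "\<dots> \<le> ereal (v3 * real n) * D"
        by (rule ereal_mult_right_mono[OF _ D0]) (use v_nonneg mn in \<open>simp add: mult_left_mono\<close>)
      finally show "ereal (v3 * real m) * bottleneck k Fc F \<le> ereal (v3 * real n) * D" .
    qed (use w0 in simp)
    also have "\<dots> = ereal (wc * (v3 * real n)) * D" by (metis mult.assoc times_ereal.simps(1))
    also have "\<dots> \<le> ereal (v3 * real n / sqrt 2) * D"
    proof (rule ereal_mult_right_mono[OF _ D0])
      have "wc \<le> 1 / sqrt 2" using w0 by (simp add: le_divide_eq)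
      hence "wc * (v3 * real n) \<le> (1 / sqrt 2) * (v3 * real n)"
        by (rule mult_right_mono) (use v_nonneg in simp)
      thus "ereal (wc * (v3 * real n)) \<le> ereal (v3 * real n / sqrt 2)" by simp
    qed
    finally show ?thesis .
  qed
  have e3: "ereal t3 \<le> ereal (v2 * real n) * max L1 L2"
  proof -
    define M where "M = max \<bar>lam b a p - lam bc ac c1\<bar> \<bar>lam b a q - lam bc ac c2\<bar>"
    have M0: "0 \<le> M" by (simp add: M_def)
    have nx: "norm (x - xc) \<le> sqrt 2 * M"
      using norm_bound[of "lam b a p - lam bc ac c1" "lam b a q - lam bc ac c2"]
      by (simp add: x_def xc_def M_def)
    have "t3 \<le> wc * (v2 * real m * norm (x - xc))" unfolding t3_def
      by (rule mult_left_mono[OF h2 w0(2)])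
    also have "\<dots> \<le> wc * (v2 * real n * (sqrt 2 * M))"
      by (intro mult_left_mono mult_mono nx w0) (use v_nonneg mn M0 in auto)
    also have "\<dots> = (v2 * real n) * ((wc * sqrt 2) * M)" by (simp add: algebra_simps)
    also have "\<dots> \<le> (v2 * real n) * M"
      using w0 M0 v_nonneg by (intro mult_left_mono) (auto simp: mult_le_cancel_right1 intro: mult_left_le_one_le)
    finally have "ereal t3 \<le> ereal (v2 * real n) * ereal M" by simp
    also have "\<dots> \<le> ereal (v2 * real n) * max L1 L2"
    proof (rule ereal_mult_left_mono)
      show "ereal M \<le> max L1 L2" using L1b L2b by (auto simp: M_def max_def)
    qed (use v_nonneg in simp)
    finally show ?thesis .
  qed
  have "ereal \<bar>Phi \<phi> X p q - Phi \<phi> X c1 c2\<bar> \<le> ereal t1 + ereal t2 + ereal t3"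
    using main by simp
  also have "\<dots> \<le> ereal (v3 * real n / sqrt 2) * D + ereal (v1 * real n) * W + ereal (v2 * real n) * max L1 L2"
    using e1 e2 e3 by (metis add_mono add.commute)
  finally show "ereal \<bar>Phi \<phi> X p q - Phi \<phi> X (box_center s i1 j1) (box_center s i2 j2)\<bar>
             \<le> ereal (v3 * real (bf_size K X) / sqrt 2)
                   * D_box k X (box_sq s i1 j1) (box_sq s i2 j2) (box_center s i1 j1) (box_center s i2 j2)
               + ereal (v1 * real (bf_size K X))
                   * W_box (box_sq s i1 j1) (box_sq s i2 j2) (box_center s i1 j1) (box_center s i2 j2)
               + ereal (v2 * real (bf_size K X))
                   * max (L_box (box_sq s i1 j1) (box_sq s i2 j2) (box_sq s i1 j1)
                            (box_center s i1 j1) (box_center s i2 j2) (box_center s i1 j1))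
                         (L_box (box_sq s i1 j1) (box_sq s i2 j2) (box_sq s i2 j2)
                            (box_center s i1 j1) (box_center s i2 j2) (box_center s i2 j2))"
    by (simp add: c1_def c2_def B1_def B2_def D_def W_def L1_def L2_def n_def)
qed

end
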